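(* Let $S$ be a $d\times d$ sample covariance matrix, $\rho\ge0$, and let $\widehat K^\rho$ be the (unique) minimizer over positive definite $K$ of $-\log\det K+\operatorname{tr}(SK)+\rho\sum_{i\neq j}\max\{0,K_{ij}\}$ (the positive graphical lasso). Let $\widehat G^\rho=(V,\widehat E^\rho)$ be the graph on $V=\{1,\dots,d\}$ with edge $ij$ iff $\widehat K^\rho_{ij}\ne0$, and define the modified sample covariance $S^\rho$ by $S^\rho_{ii}=S_{ii}$ and, for $i\ne j$, $S^\rho_{ij}=S_{ij}$ if $\widehat K^\rho_{ij}\le0$ and $S^\rho_{ij}=S_{ij}+\rho$ if $\widehat K^\rho_{ij}>0$. Then $\widehat K^\rho$ is the maximum likelihood estimator under the Gaussian graphical model determined by $\widehat G^\rho$ based on $S^\rho$, i.e. $\widehat K^\rho$ is the unique positive definite matrix $K$ with $K_{ij}=0$ for $ij\notin\widehat E^\rho$ ($i\ne j$) and $(K^{-1})_{ij}=S^\rho_{ij}$ for $i=j$ and for $ij\in\widehat E^\rho$. *)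

theory Defs
  imports "HOL-Analysis.Analysis"
begin

definition sample_mean :: "nat \<Rightarrow> (nat \<Rightarrow> real^'n) \<Rightarrow> real^'n" where
  "sample_mean N X = (1 / real N) *\<^sub>R (\<Sum>k=1..N. X k)"

definition sample_cov :: "nat \<Rightarrow> (nat \<Rightarrow> real^'n) \<Rightarrow> real^'n^'n" where
  "sample_cov N X = (\<chi> i j. (1 / real N) *
      (\<Sum>k=1..N. (X k $ i - sample_mean N X $ i) * (X k $ j - sample_mean N X $ j)))"

definition pos_def :: "real^'n^'n \<Rightarrow> bool" where
  "pos_def K \<longleftrightarrow> transpose K = K \<and> (\<forall>x. x \<noteq> 0 \<longrightarrow> x \<bullet> (K *v x) > 0)"

definition pglasso_obj :: "real^'n^'n \<Rightarrow> real \<Rightarrow> real^'n^'n \<Rightarrow> real" where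
  "pglasso_obj S \<rho> K = - ln (det K) + trace (S ** K)
      + \<rho> * (\<Sum>i\<in>UNIV. \<Sum>j\<in>UNIV. if i \<noteq> j then max 0 (K $ i $ j) else 0)"

definition is_pglasso_minimizer :: "real^'n^'n \<Rightarrow> real \<Rightarrow> real^'n^'n \<Rightarrow> bool" where
  "is_pglasso_minimizer S \<rho> K \<longleftrightarrow> pos_def K \<and>
     (\<forall>K'. pos_def K' \<longrightarrow> pglasso_obj S \<rho> K \<le> pglasso_obj S \<rho> K')"

definition supp_edges :: "real^'n^'n \<Rightarrow> ('n \<times> 'n) set" where
  "supp_edges K = {(i, j). i \<noteq> j \<and> K $ i $ j \<noteq> 0}"

definition mod_cov :: "real^'n^'n \<Rightarrow> real \<Rightarrow> real^'n^'n \<Rightarrow> real^'n^'n" where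
  "mod_cov S \<rho> K = (\<chi> i j. if i \<noteq> j \<and> K $ i $ j > 0 then S $ i $ j + \<rho> else S $ i $ j)"

definition ggm_mle_cond :: "('n \<times> 'n) set \<Rightarrow> real^'n^'n \<Rightarrow> real^'n^'n \<Rightarrow> bool" where
  "ggm_mle_cond E T K \<longleftrightarrow> pos_def K
     \<and> (\<forall>i j. i \<noteq> j \<and> (i, j) \<notin> E \<longrightarrow> K $ i $ j = 0)
     \<and> (\<forall>i j. (i = j \<or> (i, j) \<in> E) \<longrightarrow> matrix_inv K $ i $ j = T $ i $ j)"

definition is_ggm_mle :: "('n \<times> 'n) set \<Rightarrow> real^'n^'n \<Rightarrow> real^'n^'n \<Rightarrow> bool" where
  "is_ggm_mle E T K \<longleftrightarrow> ggm_mle_cond E T K \<and> (\<forall>K'. ggm_mle_cond E T K' \<longrightarrow> K' = K)"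

end

theory Submission
  imports Defs
begin

lemma sum2_insert:
  fixes f :: "'a \<Rightarrow> 'a \<Rightarrow> real"
  assumes "finite I" "m \<notin> I"
  shows "(\<Sum>a\<in>insert m I. \<Sum>b\<in>insert m I. f a b)
     = f m m + (\<Sum>b\<in>I. f m b) + (\<Sum>a\<in>I. f a m) + (\<Sum>a\<in>I. \<Sum>b\<in>I. f a b)"
  using assms by (simp add: sum.distrib)

lemma sum_delta_I:
  fixes h x :: "'a \<Rightarrow> real"
  assumes "finite I" "a \<in> I" "\<forall>b\<in>I. x b = (if b = a then 1 else 0)"
  shows "(\<Sum>b\<in>I. h b * x b) = h a"
proof -
  have "(\<Sum>b\<in>I. h b * x b) = (\<Sum>b\<in>I. if b = a then h b else 0)"
    using assms(3) by (intro sum.cong) auto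
  also have "\<dots> = h a" using assms(1,2) by simp
  finally show ?thesis .
qed

lemma sum_delta_I':
  fixes h x :: "'a \<Rightarrow> real"
  assumes "finite I" "a \<in> I" "\<forall>b\<in>I. x b = (if b = a then 1 else 0)"
  shows "(\<Sum>b\<in>I. x b * h b) = h a"
  using sum_delta_I[OF assms, of h] by (simp add: mult.commute)

lemma psd_decomp_aux:
  fixes A :: "'a \<Rightarrow> 'a \<Rightarrow> real"
  assumes "finite I" "\<forall>a b. A a b = A b a"
    "\<forall>x. 0 \<le> (\<Sum>a\<in>I. \<Sum>b\<in>I. x a * A a b * x b)"
  shows "\<exists>v::'a\<Rightarrow>'a\<Rightarrow>real. \<forall>a\<in>I. \<forall>b\<in>I. A a b = (\<Sum>k\<in>I. v k a * v k b)"
  using assms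
proof (induction I arbitrary: A rule: finite_induct)
  case empty
  then show ?case by simp
next
  case (insert m I)
  note fin = insert.hyps(1) and mI = insert.hyps(2)
  have sym: "A a b = A b a" for a b using insert.prems(1) by blast
  have psd: "0 \<le> (\<Sum>a\<in>insert m I. \<Sum>b\<in>insert m I. x a * A a b * x b)" for x
    using insert.prems(2) by blast
  define \<alpha> where "\<alpha> = A m m"
  have \<alpha>0: "\<alpha> \<ge> 0"
  proof -
    define x where "x = (\<lambda>c. if c = m then 1 else (0::real))"
    have "0 \<le> (\<Sum>a\<in>insert m I. \<Sum>b\<in>insert m I. x a * A a b * x b)" by (rule psd)
    also have "\<dots> = \<alpha>"
    proof -
      have nm: "\<forall>b\<in>I. x b = 0" using mI by (auto simp: x_def)
      show ?thesis unfolding sum2_insert[OF fin mI] 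
        by (simp add: nm \<alpha>_def) (simp add: x_def)
    qed
    finally show ?thesis .
  qed
  have zero: "A a m = 0" if "\<alpha> = 0" "a \<in> I" for a
  proof (rule ccontr)
    assume ne: "A a m \<noteq> 0"
    define t where "t = - (A a a + 1) / (2 * A a m)"
    define x where "x = (\<lambda>c. if c = m then t else if c = a then 1 else (0::real))"
    have am: "a \<noteq> m" using that mI by auto
    have xI: "\<forall>b\<in>I. x b = (if b = a then 1 else 0)" using mI x_def by auto
    have "0 \<le> (\<Sum>c\<in>insert m I. \<Sum>b\<in>insert m I. x c * A c b * x b)" by (rule psd)
    also have "\<dots> = t * t * \<alpha> + t * A m a + t * A a m + A a a"
    proof -
      have e1: "(\<Sum>b\<in>I. x m * A m b * x b) = t * A m a"
        using sum_delta_I[OF fin that(2) xI, of "\<lambda>b. x m * A m b"] by (simp add: x_def)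
      have e2: "(\<Sum>c\<in>I. x c * A c m * x m) = t * A a m"
        using sum_delta_I'[OF fin that(2) xI, of "\<lambda>c. A c m * x m"] by (simp add: x_def mult.assoc mult.commute)
      have e3: "(\<Sum>c\<in>I. \<Sum>b\<in>I. x c * A c b * x b) = A a a"
      proof -
        have "(\<Sum>c\<in>I. \<Sum>b\<in>I. x c * A c b * x b) = (\<Sum>c\<in>I. x c * (\<Sum>b\<in>I. A c b * x b))"
          by (simp add: sum_distrib_left mult.assoc)
        also have "\<dots> = (\<Sum>b\<in>I. A a b * x b)"
          by (rule sum_delta_I'[OF fin that(2) xI])
        also have "\<dots> = A a a" by (rule sum_delta_I[OF fin that(2) xI])
        finally show ?thesis .
      qed
      show ?thesis unfolding sum2_insert[OF fin mI] e1 e2 e3 by (simp add: x_def \<alpha>_def)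
    qed
    also have "\<dots> = 2 * t * A a m + A a a" using that(1) sym[of m a] by simp
    also have "\<dots> = -1" using ne by (simp add: t_def field_simps)
    finally show False by simp
  qed
  define A' where "A' = (\<lambda>a b. A a b - A a m * A m b / \<alpha>)"
  have "\<exists>v::'a\<Rightarrow>'a\<Rightarrow>real. \<forall>a\<in>I. \<forall>b\<in>I. A' a b = (\<Sum>k\<in>I. v k a * v k b)"
  proof (rule insert.IH)
    show "\<forall>a b. A' a b = A' b a" unfolding A'_def using sym by (auto simp: field_simps)
    show "\<forall>x. 0 \<le> (\<Sum>a\<in>I. \<Sum>b\<in>I. x a * A' a b * x b)"
    proof
      fix x :: "'a \<Rightarrow> real"
      define s where "s = (\<Sum>b\<in>I. A m b * x b)"
      define y where "y = x(m := - s / \<alpha>)"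
      have yI: "y b = x b" if "b \<in> I" for b using that mI y_def by auto
      have "0 \<le> (\<Sum>c\<in>insert m I. \<Sum>b\<in>insert m I. y c * A c b * y b)" by (rule psd)
      also have "\<dots> = y m * y m * \<alpha> + y m * s + y m * s + (\<Sum>c\<in>I. \<Sum>b\<in>I. x c * A c b * x b)"
      proof -
        have e1: "(\<Sum>b\<in>I. y m * A m b * y b) = y m * s"
          unfolding s_def sum_distrib_left using yI by (intro sum.cong) auto
        have e2: "(\<Sum>c\<in>I. y c * A c m * y m) = y m * s"
          unfolding s_def sum_distrib_left using yI sym by (intro sum.cong) auto
        have e3: "(\<Sum>c\<in>I. \<Sum>b\<in>I. y c * A c b * y b) = (\<Sum>c\<in>I. \<Sum>b\<in>I. x c * A c b * x b)"
          using yI by (intro sum.cong) auto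
        show ?thesis unfolding sum2_insert[OF fin mI] e1 e2 e3 by (simp add: \<alpha>_def)
      qed
      also have "\<dots> = (\<Sum>a\<in>I. \<Sum>b\<in>I. x a * A' a b * x b)"
      proof -
        have "(\<Sum>a\<in>I. \<Sum>b\<in>I. x a * A' a b * x b) = (\<Sum>a\<in>I. \<Sum>b\<in>I. x a * A a b * x b)
              - (\<Sum>a\<in>I. \<Sum>b\<in>I. (x a * A a m) * (A m b * x b)) / \<alpha>"
          unfolding A'_def by (simp add: sum_subtractf sum_divide_distrib algebra_simps)
        also have "(\<Sum>a\<in>I. \<Sum>b\<in>I. (x a * A a m) * (A m b * x b)) = s * s"
          unfolding s_def sum_product using sym by (simp add: mult.commute)
        finally have "(\<Sum>a\<in>I. \<Sum>b\<in>I. x a * A' a b * x b) = (\<Sum>a\<in>I. \<Sum>b\<in>I. x a * A a b * x b) - s * s / \<alpha>" .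
        then show ?thesis
          using \<alpha>0 by (cases "\<alpha> = 0") (auto simp: y_def field_simps power2_eq_square)
      qed
      finally show "0 \<le> (\<Sum>a\<in>I. \<Sum>b\<in>I. x a * A' a b * x b)" .
    qed
  qed
  then obtain v where v: "\<forall>a\<in>I. \<forall>b\<in>I. A' a b = (\<Sum>k\<in>I. v k a * v k b)" by blast
  define w where "w = (\<lambda>k a. if k = m then A a m / sqrt \<alpha> else if a = m then 0 else v k a)"
  have "\<forall>a\<in>insert m I. \<forall>b\<in>insert m I. A a b = (\<Sum>k\<in>insert m I. w k a * w k b)"
  proof (intro ballI)
    fix a b assume a: "a \<in> insert m I" and b: "b \<in> insert m I"
    have "(\<Sum>k\<in>insert m I. w k a * w k b) = w m a * w m b + (\<Sum>k\<in>I. w k a * w k b)"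
      using fin mI by simp
    also have "(\<Sum>k\<in>I. w k a * w k b) = (\<Sum>k\<in>I. (if a = m then 0 else v k a) * (if b = m then 0 else v k b))"
      using mI by (intro sum.cong) (auto simp: w_def)
    also have "w m a * w m b = A a m * A b m / \<alpha>"
      using \<alpha>0 by (simp add: w_def real_sqrt_mult[symmetric])
    finally have eq: "(\<Sum>k\<in>insert m I. w k a * w k b) = A a m * A b m / \<alpha> +
       (\<Sum>k\<in>I. (if a = m then 0 else v k a) * (if b = m then 0 else v k b))" .
    show "A a b = (\<Sum>k\<in>insert m I. w k a * w k b)"
    proof (cases "a = m")
      case True
      then show ?thesis unfolding eq
        using b \<alpha>0 zero[of b] sym[of m b] by (cases "\<alpha> = 0") (auto simp: \<alpha>_def)
    next
      case aI: False
      show ?thesis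
      proof (cases "b = m")
        case True
        then show ?thesis unfolding eq
          using a aI \<alpha>0 zero[of a] sym[of m a] by (cases "\<alpha> = 0") (auto simp: \<alpha>_def)
      next
        case False
        with a b aI have "a \<in> I" "b \<in> I" by auto
        then have "A a b - A a m * A m b / \<alpha> = (\<Sum>k\<in>I. v k a * v k b)"
          using v by (auto simp: A'_def)
        then show ?thesis unfolding eq using aI False sym[of m b]
          by (auto simp: algebra_simps)
      qed
    qed
  qed
  then show ?case by blast
qed

lemma sym_inner:
  fixes A :: "real^'n^'n"
  assumes "transpose A = A"
  shows "x \<bullet> (A *v y) = (A *v x) \<bullet> y"
proof -
  have "x v* A = A *v x" using assms by (metis transpose_matrix_vector)
  then show ?thesis using dot_lmul_matrix[of x A y] by simp
qed

lemma pd_invertible: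
  fixes K :: "real^'n^'n"
  assumes "pos_def K" shows "invertible K"
proof -
  have "\<forall>x. K *v x = 0 \<longrightarrow> x = 0"
    using assms unfolding pos_def_def by (metis inner_zero_right less_irrefl)
  then show ?thesis using matrix_left_invertible_ker invertible_left_inverse by blast
qed

lemma inv_props:
  fixes K :: "real^'n^'n"
  assumes "invertible K"
  shows "K ** matrix_inv K = mat 1" "matrix_inv K ** K = mat 1"
proof -
  have "\<exists>A'. K ** A' = mat 1 \<and> A' ** K = mat 1" using assms unfolding invertible_def by blast
  then have "K ** matrix_inv K = mat 1 \<and> matrix_inv K ** K = mat 1"
    unfolding matrix_inv_def by (rule someI_ex)
  then show "K ** matrix_inv K = mat 1" "matrix_inv K ** K = mat 1" by auto
qed

lemma inv_sym:
  fixes K :: "real^'n^'n"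
  assumes "pos_def K"
  shows "transpose (matrix_inv K) = matrix_inv K"
proof -
  have inv: "invertible K" by (rule pd_invertible[OF assms])
  have tK: "transpose K = K" using assms pos_def_def by blast
  have "transpose (matrix_inv K) ** K = mat 1"
    using arg_cong[OF inv_props(1)[OF inv], of transpose] tK by (simp add: matrix_transpose_mul)
  then have "transpose (matrix_inv K) = transpose (matrix_inv K) ** (K ** matrix_inv K)"
    using inv_props(1)[OF inv] by simp
  also have "\<dots> = matrix_inv K"
    by (simp add: matrix_mul_assoc \<open>transpose (matrix_inv K) ** K = mat 1\<close>)
  finally show ?thesis .
qed

lemma inv_pd:
  fixes K :: "real^'n^'n"
  assumes "pos_def K"
  shows "pos_def (matrix_inv K)"
proof -
  have inv: "invertible K" by (rule pd_invertible[OF assms])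
  have tK: "transpose K = K" using assms pos_def_def by blast
  show ?thesis unfolding pos_def_def
  proof (intro conjI allI impI)
    show "transpose (matrix_inv K) = matrix_inv K" by (rule inv_sym[OF assms])
    fix x :: "real^'n" assume x: "x \<noteq> 0"
    define y where "y = matrix_inv K *v x"
    have Ky: "K *v y = x" unfolding y_def matrix_vector_mul_assoc inv_props(1)[OF inv] by simp
    have y0: "y \<noteq> 0" using Ky x by auto
    have "x \<bullet> (matrix_inv K *v x) = (K *v y) \<bullet> y" using Ky y_def by simp
    also have "\<dots> = y \<bullet> (K *v y)" by (simp add: inner_commute)
    also have "\<dots> > 0" using assms y0 unfolding pos_def_def by blast
    finally show "x \<bullet> (matrix_inv K *v x) > 0" .
  qed
qed

lemma quad_form_sum:
  fixes A :: "real^'n^'n"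
  shows "(\<chi> a. x a) \<bullet> (A *v (\<chi> a. x a)) = (\<Sum>a\<in>UNIV. \<Sum>b\<in>UNIV. x a * A$a$b * x b)"
  by (simp add: inner_vec_def matrix_vector_mult_def sum_distrib_left mult.assoc)

lemma psd_decomp_mat:
  fixes A :: "real^'n^'n"
  assumes "transpose A = A" "\<forall>x. 0 \<le> x \<bullet> (A *v x)"
  shows "\<exists>V::real^'n^'n. A = V ** transpose V"
proof -
  have "\<exists>v::'n\<Rightarrow>'n\<Rightarrow>real. \<forall>a\<in>UNIV. \<forall>b\<in>UNIV. A$a$b = (\<Sum>k\<in>UNIV. v k a * v k b)"
  proof (rule psd_decomp_aux)
    show "\<forall>a b. A $ a $ b = A $ b $ a"
    proof (intro allI)
      fix a b
      show "A$a$b = A$b$a" using arg_cong[OF assms(1), of "\<lambda>M. M$b$a"] by (simp add: transpose_def)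
    qed
    show "\<forall>x. 0 \<le> (\<Sum>a\<in>UNIV. \<Sum>b\<in>UNIV. x a * A $ a $ b * x b)"
    proof
      fix x :: "'n \<Rightarrow> real"
      have "0 \<le> (\<chi> a. x a) \<bullet> (A *v (\<chi> a. x a))" using assms(2) by blast
      then show "0 \<le> (\<Sum>a\<in>UNIV. \<Sum>b\<in>UNIV. x a * A $ a $ b * x b)"
        by (simp only: quad_form_sum)
    qed
  qed simp
  then obtain v :: "'n \<Rightarrow> 'n \<Rightarrow> real" where v: "\<And>a b. A$a$b = (\<Sum>k\<in>UNIV. v k a * v k b)" by blast
  define V :: "real^'n^'n" where "V = (\<chi> a k. v k a)"
  have "A = V ** transpose V"
    by (simp add: vec_eq_iff matrix_matrix_mult_def transpose_def V_def v)
  then show ?thesis by blast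
qed

lemma pd_psd:
  fixes K :: "real^'n^'n"
  assumes "pos_def K" shows "0 \<le> x \<bullet> (K *v x)"
  using assms unfolding pos_def_def by (cases "x = 0") (auto intro: less_imp_le)

lemma det_pos:
  fixes K :: "real^'n^'n"
  assumes "pos_def K" shows "det K > 0"
proof -
  have tK: "transpose K = K" using assms pos_def_def by blast
  obtain V :: "real^'n^'n" where V: "K = V ** transpose V"
    using psd_decomp_mat[OF tK allI[OF pd_psd[OF assms]]] by blast
  have "det K = det V * det V" using V by (simp add: det_mul)
  moreover have "det K \<noteq> 0" using pd_invertible[OF assms] invertible_det_nz by blast
  ultimately show ?thesis by (metis not_real_square_gt_zero mult_eq_0_iff)
qed

lemma sum_entry_trace:
  fixes X Y :: "real^'n^'n"
  shows "(\<Sum>a\<in>UNIV. \<Sum>b\<in>UNIV. X$a$b * Y$a$b) = trace (transpose X ** Y)"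
  unfolding trace_def matrix_matrix_mult_def transpose_def by (simp, subst sum.swap, simp)

lemma key_pos:
  fixes P Q D :: "real^'n^'n"
  assumes "pos_def P" "pos_def Q" "transpose D = D"
    and "(\<Sum>a\<in>UNIV. \<Sum>b\<in>UNIV. D$a$b * (P ** D ** Q)$a$b) = 0"
  shows "D = 0"
proof -
  have tP: "transpose P = P" using assms(1) pos_def_def by blast
  have tQ: "transpose Q = Q" using assms(2) pos_def_def by blast
  obtain V :: "real^'n^'n" where V: "P = V ** transpose V"
    using psd_decomp_mat[OF tP allI[OF pd_psd[OF assms(1)]]] by blast
  define U where "U = transpose V ** D"
  have "trace (U ** Q ** transpose U) = trace (transpose U ** (U ** Q))"
    by (rule trace_mul_sym)
  also have "transpose U ** (U ** Q) = transpose D ** (P ** D ** Q)"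
    unfolding U_def V by (simp add: matrix_transpose_mul assms(3) matrix_mul_assoc)
  also have "trace (transpose D ** (P ** D ** Q)) = 0"
    using assms(4) by (simp only: sum_entry_trace)
  finally have tr0: "trace (U ** Q ** transpose U) = 0" .
  have diag: "(U ** Q ** transpose U)$k$k = row k U \<bullet> (Q *v row k U)" for k
    apply (simp add: matrix_matrix_mult_def transpose_def inner_vec_def matrix_vector_mult_def row_def
        sum_distrib_left sum_distrib_right)
    apply (subst sum.swap)
    apply (simp add: mult_ac)
    done
  have nn: "\<forall>k\<in>UNIV. 0 \<le> (U ** Q ** transpose U)$k$k" using diag pd_psd[OF assms(2)] by simp
  have "\<forall>k\<in>UNIV. (U ** Q ** transpose U)$k$k = 0"
    using tr0 sum_nonneg_eq_0_iff[OF finite nn[rule_format]] nn unfolding trace_def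
    by (simp add: sum_nonneg_eq_0_iff)
  then have "row k U = 0" for k
  proof -
    have z: "row k U \<bullet> (Q *v row k U) = 0" using diag[of k] \<open>\<forall>k\<in>UNIV. (U ** Q ** transpose U)$k$k = 0\<close> by simp
    show ?thesis
    proof (rule ccontr)
      assume "row k U \<noteq> 0"
      then have "row k U \<bullet> (Q *v row k U) > 0" using assms(2) unfolding pos_def_def by blast
      then show False using z by simp
    qed
  qed
  then have U0: "U = 0" by (simp add: vec_eq_iff row_def)
  have invV: "invertible P" by (rule pd_invertible[OF assms(1)])
  have "P ** D = V ** U" unfolding U_def V by (simp add: matrix_mul_assoc)
  then have "P ** D = 0" using U0 by (simp add: vec_eq_iff matrix_matrix_mult_def)
  then have "matrix_inv P ** (P ** D) = 0" by (simp add: vec_eq_iff matrix_matrix_mult_def)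
  then show "D = 0" by (simp add: matrix_mul_assoc inv_props(2)[OF invV])
qed

definition Hm :: "'n \<Rightarrow> 'n \<Rightarrow> real^'n^'n" where
  "Hm i j = (\<chi> r c. if (r = i \<and> c = j) \<or> (r = j \<and> c = i) then 1 else 0)"

lemma if_one_mult: "(if P then 1 else 0) * (y::real) = (if P then y else 0)" by simp

lemma Hm_mult: "Hm i j *v x = (\<chi> r. if i = j then (if r = i then x$i else 0)
     else (if r = i then x$j else 0) + (if r = j then x$i else 0))"
proof -
  have "(\<Sum>c\<in>UNIV. (if (r = i \<and> c = j) \<or> (r = j \<and> c = i) then 1 else 0) * x$c) =
     (if i = j then (if r = i then x$i else 0)
     else (if r = i then x$j else 0) + (if r = j then x$i else 0))" for r
  proof (cases "i = j")
    case True
    then show ?thesis by (cases "r = i") (auto simp: if_one_mult cong: if_cong)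
  next
    case False
    then show ?thesis by (cases "r = i"; cases "r = j") (auto simp: if_one_mult cong: if_cong)
  qed
  then show ?thesis by (simp add: Hm_def matrix_vector_mult_def vec_eq_iff)
qed

lemma mult_if_zero: "a * (if P then b else 0) = (if P then a * b else (0::real))" by simp

lemma Hm_quad: "x \<bullet> (Hm i j *v x) = (if i = j then x$i * x$i else 2 * x$i * x$j)"
proof (cases "i = j")
  case True
  then have "x \<bullet> (Hm i j *v x) = (\<Sum>r\<in>UNIV. if r = i then x$r * x$i else 0)"
    unfolding Hm_mult inner_vec_def by (simp add: mult_if_zero)
  then show ?thesis using True by simp
next
  case False
  then have "x \<bullet> (Hm i j *v x) = (\<Sum>r\<in>UNIV. if r = i then x$r * x$j else 0) + (\<Sum>r\<in>UNIV. if r = j then x$r * x$i else 0)"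
    unfolding Hm_mult inner_vec_def by (simp add: mult_if_zero distrib_left sum.distrib)
  then show ?thesis using False by simp
qed

lemma Hm_quad_bound: "\<bar>x \<bullet> (Hm i j *v x)\<bar> \<le> 2 * (norm x)^2"
proof -
  have a: "\<bar>x$i\<bar> \<le> norm x" "\<bar>x$j\<bar> \<le> norm x" by (simp_all add: component_le_norm_cart)
  have "\<bar>x$i * x$j\<bar> \<le> norm x * norm x"
    unfolding abs_mult by (rule mult_mono) (use a in auto)
  moreover have "\<bar>x$i * x$i\<bar> \<le> norm x * norm x"
    unfolding abs_mult by (rule mult_mono) (use a in auto)
  moreover have "0 \<le> norm x * norm x" by simp
  ultimately have "\<bar>x$i * x$j\<bar> \<le> norm x * norm x" "\<bar>x$i * x$i\<bar> \<le> 2 * (norm x * norm x)" by linarith+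
  then show ?thesis by (auto simp: Hm_quad power2_eq_square abs_mult)
qed

lemma Hm_sym: "transpose (Hm i j) = Hm i j"
  by (auto simp: Hm_def transpose_def vec_eq_iff)

lemma pd_lower:
  fixes K :: "real^'n^'n"
  assumes "pos_def K"
  shows "\<exists>c>0. \<forall>x. c * (norm x)^2 \<le> x \<bullet> (K *v x)"
proof -
  have cont: "continuous_on (sphere 0 1) (\<lambda>x::real^'n. x \<bullet> (K *v x))"
    by (intro continuous_intros linear_continuous_on matrix_vector_mul_linear)
  obtain u where u: "u \<in> sphere (0::real^'n) 1" and umin: "\<forall>y\<in>sphere 0 1. u \<bullet> (K *v u) \<le> y \<bullet> (K *v y)"
  proof -
    have ne: "sphere (0::real^'n) 1 \<noteq> {}" by simp
    show ?thesis using continuous_attains_inf[OF compact_sphere ne cont] that by blast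
  qed
  have u0: "u \<noteq> 0" using u by auto
  define c where "c = u \<bullet> (K *v u)"
  have c0: "c > 0" using assms u0 unfolding pos_def_def c_def by blast
  have "c * (norm x)^2 \<le> x \<bullet> (K *v x)" for x
  proof (cases "x = 0")
    case True then show ?thesis by simp
  next
    case False
    define y where "y = (1 / norm x) *\<^sub>R x"
    have y: "y \<in> sphere 0 1" using False by (simp add: y_def)
    have x: "x = norm x *\<^sub>R y" using False by (simp add: y_def)
    have "x \<bullet> (K *v x) = (norm x)^2 * (y \<bullet> (K *v y))"
      by (subst (1 2) x) (simp add: matrix_vector_mult_scaleR power2_eq_square)
    moreover have "c \<le> y \<bullet> (K *v y)" using umin y c_def by blast
    ultimately show ?thesis by (simp add: mult_right_mono mult.commute)
  qed
  then show ?thesis using c0 by blast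
qed

lemma pd_perturb:
  fixes K :: "real^'n^'n"
  assumes "pos_def K"
  shows "\<exists>d>0. \<forall>t. \<bar>t\<bar> < d \<longrightarrow> pos_def (K + t *\<^sub>R Hm i j)"
proof -
  obtain c where c0: "c > 0" and c: "\<And>x. c * (norm x)^2 \<le> x \<bullet> (K *v x)"
    using pd_lower[OF assms] by blast
  have tK: "transpose K = K" using assms pos_def_def by blast
  have "pos_def (K + t *\<^sub>R Hm i j)" if t: "\<bar>t\<bar> < c / 2" for t
    unfolding pos_def_def
  proof (intro conjI allI impI)
    show "transpose (K + t *\<^sub>R Hm i j) = K + t *\<^sub>R Hm i j"
      using tK Hm_sym[of i j] by (simp add: transpose_def vec_eq_iff)
    fix x :: "real^'n" assume x: "x \<noteq> 0"
    have e: "x \<bullet> ((K + t *\<^sub>R Hm i j) *v x) = x \<bullet> (K *v x) + t * (x \<bullet> (Hm i j *v x))"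
      by (simp add: matrix_vector_mult_def inner_vec_def sum.distrib algebra_simps sum_distrib_left)
    have "\<bar>t * (x \<bullet> (Hm i j *v x))\<bar> \<le> \<bar>t\<bar> * (2 * (norm x)^2)"
      unfolding abs_mult by (rule mult_left_mono[OF Hm_quad_bound]) simp
    also have "\<dots> < c * (norm x)^2"
    proof -
      have "(norm x)^2 > 0" using x by simp
      then show ?thesis using t by (simp add: field_simps)
    qed
    finally show "x \<bullet> ((K + t *\<^sub>R Hm i j) *v x) > 0" using e c[of x] by linarith
  qed
  then show ?thesis using c0 by (intro exI[of _ "c/2"]) auto
qed

lemma det_row_pert:
  fixes M :: "real^'n^'n"
  shows "det (\<chi> r. if r = k then M$r + t *s w else M$r) = det M + t * det (\<chi> r. if r = k then w else M$r)"
proof -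
  have "det (\<chi> r. if r = k then M$r + t *s w else M$r) =
        det (\<chi> r. if r = k then M$r else M$r) + det (\<chi> r. if r = k then t *s w else M$r)"
    using det_row_add[of k "\<lambda>r. M$r" "\<lambda>_. t *s w" "\<lambda>r. M$r"] by simp
  also have "(\<chi> r. if r = k then M$r else M$r) = M" by (simp add: vec_eq_iff)
  also have "det (\<chi> r. if r = k then t *s w else M$r) = t * det (\<chi> r. if r = k then w else M$r)"
    using det_row_mul[of k t "\<lambda>_. w" "\<lambda>r. M$r"] by simp
  finally show ?thesis .
qed

lemma det_Hm_diag:
  fixes K :: "real^'n^'n"
  shows "det (K + t *\<^sub>R Hm i i) = det K + t * det (\<chi> r. if r = i then axis i 1 else K$r)"
proof -
  have "K + t *\<^sub>R Hm i i = (\<chi> r. if r = i then K$r + t *s axis i 1 else K$r)"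
    by (auto simp: vec_eq_iff Hm_def axis_def)
  then show ?thesis by (simp only: det_row_pert)
qed

lemma quad_rearr: "(x::real) = (a + t*b) + t*(c + t*d) \<Longrightarrow> x = a + t*(b+c) + t^2*d"
  by (simp add: algebra_simps power2_eq_square)

lemma det_Hm_off:
  fixes K :: "real^'n^'n"
  assumes ij: "i \<noteq> j"
  shows "det (K + t *\<^sub>R Hm i j) = det K + t * (det (\<chi> r. if r = i then axis j 1 else K$r)
     + det (\<chi> r. if r = j then axis i 1 else K$r))
     + t^2 * det (\<chi> r. if r = i then axis j 1 else if r = j then axis i 1 else K$r)"
proof -
  define M1 where "M1 = (\<chi> r. if r = i then K$r + t *s axis j 1 else K$r)"
  define N where "N = (\<chi> r. if r = j then axis i 1 else K$r)"
  have 1: "K + t *\<^sub>R Hm i j = (\<chi> r. if r = j then M1$r + t *s axis i 1 else M1$r)"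
    using ij by (auto simp: vec_eq_iff Hm_def axis_def M1_def)
  have 3: "det M1 = det K + t * det (\<chi> r. if r = i then axis j 1 else K$r)"
    unfolding M1_def by (rule det_row_pert)
  have 4: "(\<chi> r. if r = j then axis i 1 else M1$r) = (\<chi> r. if r = i then N$r + t *s axis j 1 else N$r)"
    using ij by (auto simp: vec_eq_iff M1_def N_def)
  have 6: "(\<chi> r. if r = i then axis j 1 else N$r) = (\<chi> r. if r = i then axis j 1 else if r = j then axis i 1 else K$r)"
    unfolding N_def by (simp add: vec_eq_iff)
  have "det (K + t *\<^sub>R Hm i j) = det M1 + t * det (\<chi> r. if r = j then axis i 1 else M1$r)"
    unfolding 1 by (rule det_row_pert)
  also have "det (\<chi> r. if r = j then axis i 1 else M1$r) = det N + t * det (\<chi> r. if r = i then axis j 1 else if r = j then axis i 1 else K$r)"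
    unfolding 4 det_row_pert 6 ..
  finally have "det (K + t *\<^sub>R Hm i j) = (det K + t * det (\<chi> r. if r = i then axis j 1 else K$r)) +
     t * (det N + t * det (\<chi> r. if r = i then axis j 1 else if r = j then axis i 1 else K$r))"
    unfolding 3 .
  then show ?thesis unfolding N_def by (rule quad_rearr)
qed

lemma cofactor_inv:
  fixes K :: "real^'n^'n"
  assumes "pos_def K"
  shows "det (\<chi> r. if r = k then axis l 1 else K$r) = det K * matrix_inv K $ k $ l"
proof -
  have inv: "invertible K" by (rule pd_invertible[OF assms])
  have tK: "transpose K = K" using assms pos_def_def by blast
  define x where "x = matrix_inv K *v axis l 1"
  have Kx: "K *v x = axis l 1" unfolding x_def matrix_vector_mul_assoc inv_props(1)[OF inv] by simp
  have xk: "x $ k = matrix_inv K $ k $ l"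
    by (simp add: x_def matrix_vector_mult_def axis_def mult_if_zero)
  have T: "transpose (\<chi> r. if r = k then axis l 1 else K$r) = (\<chi> i j. if j = k then (K *v x)$i else K$i$j)"
  proof -
    have Ks: "K$a$b = K$b$a" for a b using arg_cong[OF tK, of "\<lambda>M. M$b$a"] by (simp add: transpose_def)
    show ?thesis unfolding Kx vec_eq_iff transpose_def using Ks by simp
  qed
  have "det (\<chi> r. if r = k then axis l 1 else K$r) = det (\<chi> i j. if j = k then (K *v x)$i else K$i$j)"
    using arg_cong[OF T, of det] by (simp only: det_transpose)
  also have "\<dots> = x $ k * det K" by (rule cramer_lemma)
  finally show ?thesis using xk by simp
qed

definition penal :: "real^'n^'n \<Rightarrow> real" where
  "penal M = (\<Sum>i\<in>UNIV. \<Sum>j\<in>UNIV. if i \<noteq> j then max 0 (M$i$j) else 0)"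

lemma obj_eq: "pglasso_obj S \<rho> K = - ln (det K) + trace (S ** K) + \<rho> * penal K"
  by (simp add: pglasso_obj_def penal_def)

lemma trace_pert: "trace (S ** (K + t *\<^sub>R H)) = trace (S ** K) + t * trace (S ** (H::real^'n^'n))"
  by (simp add: trace_def matrix_matrix_mult_def algebra_simps sum.distrib sum_distrib_left)

lemma trace_Hm:
  fixes S :: "real^'n^'n"
  assumes tS: "transpose S = S"
  shows "trace (S ** Hm i j) = (if i = j then S$i$i else 2 * S$i$j)"
proof -
  have e: "(S ** Hm i j)$a$a = (Hm i j *v (S$a))$a" for a
    unfolding matrix_matrix_mult_def matrix_vector_mult_def
    by (auto simp: Hm_def mult.commute intro!: sum.cong)
  have Ss: "S$a$b = S$b$a" for a b using arg_cong[OF tS, of "\<lambda>M. M$b$a"] by (simp add: transpose_def)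
  show ?thesis
  proof (cases "i = j")
    case True
    have "trace (S ** Hm i j) = (\<Sum>a\<in>UNIV. if a = i then S$a$i else 0)"
      unfolding trace_def e Hm_mult using True by simp
    then show ?thesis using True by simp
  next
    case False
    have "trace (S ** Hm i j) = (\<Sum>a\<in>UNIV. if a = i then S$a$j else 0) + (\<Sum>a\<in>UNIV. if a = j then S$a$i else 0)"
      unfolding trace_def e Hm_mult using False by (simp add: sum.distrib)
    then show ?thesis using False Ss[of j i] by simp
  qed
qed

lemma pen_diag: "penal (K + t *\<^sub>R Hm i i) = penal K"
  unfolding penal_def by (intro sum.cong refl) (auto simp: Hm_def)

lemma sum_delta2: "(\<Sum>(a::'n::finite)\<in>UNIV. \<Sum>(b::'n)\<in>UNIV. if a = i \<and> b = j then v else (0::real)) = v"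
proof -
  have "(\<Sum>b\<in>UNIV. if a = i \<and> b = j then v else (0::real)) = (if a = i then v else 0)" for a
    by (cases "a = i") (simp_all add: sum.delta sum.delta')
  then show ?thesis by simp
qed

lemma pen_off:
  fixes K :: "real^'n^'n"
  assumes ij: "i \<noteq> j" and Ks: "K$j$i = K$i$j" and nz: "K$i$j \<noteq> 0" and t: "\<bar>t\<bar> < \<bar>K$i$j\<bar>"
  shows "penal (K + t *\<^sub>R Hm i j) = penal K + 2 * t * (if K$i$j > 0 then 1 else 0)"
proof -
  define c :: real where "c = (if K$i$j > 0 then 1 else 0)"
  have mx: "max 0 (K$i$j + t) = max 0 (K$i$j) + t * c"
    using nz t by (cases "K$i$j > 0") (auto simp: c_def max_def abs_if split: if_splits)
  have tw: "(if a \<noteq> b then max 0 ((K + t *\<^sub>R Hm i j)$a$b) else 0) =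
     (if a \<noteq> b then max 0 (K$a$b) else 0) + (if a = i \<and> b = j then t*c else 0) + (if a = j \<and> b = i then t*c else 0)" for a b
  proof (cases "a = i \<and> b = j")
    case True
    then show ?thesis using ij mx by (simp add: Hm_def)
  next
    case F1: False
    show ?thesis
    proof (cases "a = j \<and> b = i")
      case True
      then show ?thesis using ij mx Ks by (simp add: Hm_def)
    next
      case False
      have h0: "Hm i j $ a $ b = 0" using F1 False by (auto simp: Hm_def)
      then have "(K + t *\<^sub>R Hm i j)$a$b = K$a$b" by simp
      then show ?thesis using F1 False by (simp only: if_False)
    qed
  qed
  have "penal (K + t *\<^sub>R Hm i j) = penal K + (\<Sum>a\<in>UNIV. \<Sum>b\<in>UNIV. if a = i \<and> b = j then t*c else 0)
      + (\<Sum>a\<in>UNIV. \<Sum>b\<in>UNIV. if a = j \<and> b = i then t*c else 0)"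
    unfolding penal_def tw by (simp only: sum.distrib)
  also have "\<dots> = penal K + 2 * t * c" by (simp only: sum_delta2)
  finally show ?thesis unfolding c_def .
qed

lemma foc_generic:
  fixes F :: "real \<Rightarrow> real"
  assumes dK: "dK > 0" and d: "d > 0"
    and mn: "\<And>t. \<bar>t\<bar> < d \<Longrightarrow> F 0 \<le> F t"
    and form: "\<And>t. \<bar>t\<bar> < d \<Longrightarrow> F t = - ln (dK + t*a + t^2*b) + t * s + cc"
  shows "a / dK = s"
proof -
  define f where "f t = - ln (dK + t*a + t^2*b) + t * s" for t
  have der: "(f has_real_derivative (- (a / dK) + s)) (at 0)"
    unfolding f_def by (auto intro!: derivative_eq_intros simp: dK field_simps)
  have "\<forall>y. \<bar>0 - y\<bar> < d \<longrightarrow> f 0 \<le> f y"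
  proof (intro allI impI)
    fix y :: real assume y: "\<bar>0 - y\<bar> < d"
    have "F 0 \<le> F y" using mn y by simp
    moreover have "F 0 = f 0 + cc" using form[of 0] d by (simp add: f_def)
    moreover have "F y = f y + cc" using form[of y] y by (simp add: f_def)
    ultimately show "f 0 \<le> f y" by simp
  qed
  from DERIV_local_min[OF der d this] show ?thesis by simp
qed

lemma foc_diag:
  fixes S K :: "real^'n^'n"
  assumes mn: "is_pglasso_minimizer S \<rho> K" and tS: "transpose S = S"
  shows "matrix_inv K $ i $ i = S $ i $ i"
proof -
  have pdK: "pos_def K" using mn is_pglasso_minimizer_def by blast
  obtain d where d: "d > 0" and pd: "\<And>t. \<bar>t\<bar> < d \<Longrightarrow> pos_def (K + t *\<^sub>R Hm i i)"
    using pd_perturb[OF pdK, of i i] by blast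
  define F where "F t = pglasso_obj S \<rho> (K + t *\<^sub>R Hm i i)" for t
  have dK: "det K > 0" by (rule det_pos[OF pdK])
  have "(det K * matrix_inv K $ i $ i) / det K = S $ i $ i"
  proof (rule foc_generic[where F = F and d = d and b = 0 and cc = "trace (S ** K) + \<rho> * penal K"])
    show "det K > 0" by (rule dK)
    show "d > 0" by (rule d)
    show "F 0 \<le> F t" if "\<bar>t\<bar> < d" for t
      using mn pd[OF that] unfolding is_pglasso_minimizer_def F_def by simp
    show "F t = - ln (det K + t * (det K * matrix_inv K $ i $ i) + t^2 * 0) + t * S $ i $ i
        + (trace (S ** K) + \<rho> * penal K)" for t
      unfolding F_def obj_eq det_Hm_diag cofactor_inv[OF pdK] trace_pert trace_Hm[OF tS] pen_diag
      by simp
  qed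
  then show ?thesis using dK by simp
qed

lemma foc_off:
  fixes S K :: "real^'n^'n"
  assumes mn: "is_pglasso_minimizer S \<rho> K" and tS: "transpose S = S"
    and ij: "i \<noteq> j" and nz: "K$i$j \<noteq> 0"
  shows "matrix_inv K $ i $ j = S $ i $ j + (if K$i$j > 0 then \<rho> else 0)"
proof -
  have pdK: "pos_def K" using mn is_pglasso_minimizer_def by blast
  have tK: "transpose K = K" using pdK pos_def_def by blast
  have Ks: "K$j$i = K$i$j" using arg_cong[OF tK, of "\<lambda>M. M$i$j"] by (simp add: transpose_def)
  have tP: "transpose (matrix_inv K) = matrix_inv K" by (rule inv_sym[OF pdK])
  have Ps: "matrix_inv K $ j $ i = matrix_inv K $ i $ j"
    using arg_cong[OF tP, of "\<lambda>M. M$i$j"] by (simp add: transpose_def)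
  obtain d1 where d1: "d1 > 0" and pd: "\<And>t. \<bar>t\<bar> < d1 \<Longrightarrow> pos_def (K + t *\<^sub>R Hm i j)"
    using pd_perturb[OF pdK, of i j] by blast
  define d where "d = min d1 \<bar>K$i$j\<bar>"
  have d: "d > 0" using d1 nz by (simp add: d_def)
  define F where "F t = pglasso_obj S \<rho> (K + t *\<^sub>R Hm i j)" for t
  define c :: real where "c = (if K$i$j > 0 then 1 else 0)"
  define d3 where "d3 = det (\<chi> r. if r = i then axis j 1 else if r = j then axis i (1::real) else K$r)"
  have dK: "det K > 0" by (rule det_pos[OF pdK])
  have "(2 * (det K * matrix_inv K $ i $ j)) / det K = 2 * S $ i $ j + 2 * \<rho> * c"
  proof (rule foc_generic[where F = F and d = d and b = d3 and cc = "trace (S ** K) + \<rho> * penal K"])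
    show "det K > 0" by (rule dK)
    show "d > 0" by (rule d)
    show "F 0 \<le> F t" if "\<bar>t\<bar> < d" for t
      using mn pd[of t] that unfolding is_pglasso_minimizer_def F_def d_def by simp
    show "F t = - ln (det K + t * (2 * (det K * matrix_inv K $ i $ j)) + t^2 * d3) + t * (2 * S $ i $ j + 2 * \<rho> * c)
        + (trace (S ** K) + \<rho> * penal K)" if "\<bar>t\<bar> < d" for t
    proof -
      have pen: "penal (K + t *\<^sub>R Hm i j) = penal K + 2 * t * c"
        unfolding c_def by (rule pen_off[OF ij Ks nz]) (use that in \<open>simp add: d_def\<close>)
      show ?thesis
        unfolding F_def obj_eq det_Hm_off[OF ij] cofactor_inv[OF pdK] trace_pert trace_Hm[OF tS] pen
        using ij Ps by (simp add: d3_def algebra_simps)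
    qed
  qed
  then have "matrix_inv K $ i $ j = S $ i $ j + \<rho> * c" using dK by (simp add: field_simps)
  then show ?thesis by (simp add: c_def)
qed

lemma mat_sub_ldistrib: "(A::real^'n^'n) ** (B - C) = A ** B - A ** C"
  by (simp add: matrix_matrix_mult_def vec_eq_iff algebra_simps sum_subtractf)

lemma mat_sub_rdistrib: "((B::real^'n^'n) - C) ** A = B ** A - C ** A"
  by (simp add: matrix_matrix_mult_def vec_eq_iff algebra_simps sum_subtractf)

lemma sample_cov_sym: "transpose (sample_cov N X) = sample_cov N X"
  by (simp add: sample_cov_def transpose_def vec_eq_iff mult.commute)

theorem corollary7p1:
  fixes X :: "nat \<Rightarrow> real^'n" and N :: nat and S Khat :: "real^'n^'n" and \<rho> :: real
  assumes "N \<ge> 1"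
    and "S = sample_cov N X"
    and "\<rho> \<ge> 0"
    and "is_pglasso_minimizer S \<rho> Khat"
  shows "is_ggm_mle (supp_edges Khat) (mod_cov S \<rho> Khat) Khat"
proof -
  note mn = assms(4)
  have tS: "transpose S = S" using assms(2) sample_cov_sym by simp
  have pdK: "pos_def Khat" using mn is_pglasso_minimizer_def by blast
  define E where "E = supp_edges Khat"
  define T where "T = mod_cov S \<rho> Khat"
  have invT: "matrix_inv Khat $ a $ b = T $ a $ b" if "a = b \<or> (a, b) \<in> E" for a b
  proof (cases "a = b")
    case True
    then show ?thesis using foc_diag[OF mn tS, of a] by (simp add: T_def mod_cov_def)
  next
    case False
    then have nz: "Khat $ a $ b \<noteq> 0" using that by (simp add: E_def supp_edges_def)
    show ?thesis using foc_off[OF mn tS False nz] False by (simp add: T_def mod_cov_def)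
  qed
  have zero: "Khat $ a $ b = 0" if "a \<noteq> b" "(a, b) \<notin> E" for a b
    using that by (simp add: E_def supp_edges_def)
  have cond: "ggm_mle_cond E T Khat"
    unfolding ggm_mle_cond_def using pdK invT zero by blast
  have uniq: "K' = Khat" if c': "ggm_mle_cond E T K'" for K'
  proof -
    have pdK': "pos_def K'" using c' unfolding ggm_mle_cond_def by (rule conjunct1)
    have c2: "\<forall>i j. i \<noteq> j \<and> (i, j) \<notin> E \<longrightarrow> K' $ i $ j = 0"
      using c' unfolding ggm_mle_cond_def by (rule conjunct1[OF conjunct2])
    have c3: "\<forall>i j. (i = j \<or> (i, j) \<in> E) \<longrightarrow> matrix_inv K' $ i $ j = T $ i $ j"
      using c' unfolding ggm_mle_cond_def by (rule conjunct2[OF conjunct2])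
    define D where "D = K' - Khat"
    define P where "P = matrix_inv Khat"
    define Q where "Q = matrix_inv K'"
    have tD: "transpose D = D"
      using pdK pdK' unfolding pos_def_def D_def by (simp add: transpose_def vec_eq_iff)
    have iK: "invertible Khat" by (rule pd_invertible[OF pdK])
    have iK': "invertible K'" by (rule pd_invertible[OF pdK'])
    have PDQ: "P ** D ** Q = P - Q"
    proof -
      have "P ** D ** Q = P ** (K' ** Q) - (P ** Khat) ** Q"
        unfolding D_def mat_sub_ldistrib mat_sub_rdistrib by (simp add: matrix_mul_assoc)
      also have "\<dots> = P - Q" unfolding P_def Q_def inv_props(1)[OF iK'] inv_props(2)[OF iK] by simp
      finally show ?thesis .
    qed
    have term0: "D$a$b * (P ** D ** Q)$a$b = 0" for a b
    proof (cases "a = b \<or> (a, b) \<in> E")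
      case True
      have "P$a$b = T$a$b" using invT[OF True] P_def by simp
      moreover have "Q$a$b = T$a$b" using c3[rule_format, OF True] unfolding Q_def .
      ultimately show ?thesis unfolding PDQ by simp
    next
      case False
      then have "a \<noteq> b" "(a, b) \<notin> E" by auto
      then have "K'$a$b = 0" "Khat$a$b = 0" using c2 zero by auto
      then show ?thesis by (simp add: D_def)
    qed
    have "(\<Sum>a\<in>UNIV. \<Sum>b\<in>UNIV. D$a$b * (P ** D ** Q)$a$b) = 0" using term0 by (simp only: sum.neutral_const)
    then have "D = 0" using key_pos[OF inv_pd[OF pdK] inv_pd[OF pdK'] tD] unfolding P_def Q_def by blast
    then show "K' = Khat" unfolding D_def by simp
  qed
  show ?thesis unfolding is_ggm_mle_def E_def[symmetric] T_def[symmetric] using cond uniq by blast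
qed

end
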